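(* Let $M$ and $N$ be finitely generated, semipositive binoids of finite dimension such that $e_{HK}(M)$ and $e_{HK}(N)$ exist. Then $e_{HK}(M\wedge N)$ exists and $$e_{HK}(M\wedge N)=e_{HK}(M)\cdot e_{HK}(N).$$
   Context: A binoid $(N,+,0,\infty)$ is a commutative monoid $(N,+,0)$ with an element $\infty$ satisfying $a+\infty=\infty$ for all $a\in N$. Write $N^\bullet=N\setminus\{\infty\}$, $N^\times$ for the group of units of $N$ and $N_+=N\setminus N^\times$. $N$ is finitely generated if it is finitely generated as a monoid; semipositive if $N\neq\{\infty\}$ and $N^\times$ is finite. The smash product $M\wedge N$ is the binoid $(M^\bullet\times N^\bullet)\cup\{\infty\}$ with $(a,b)+(c,d)=(a+c,b+d)$ if $a+c\neq\infty$ and $b+d\neq\infty$, and $=\infty$ otherwise. An ideal of $N$ is a nonempty subset $I\subseteq N$ with $I+N\subseteq I$. For an ideal $I$ and $q\in\mathbb N_+$, $[q]I$ denotes the ideal generated by $\{qa: a\in I\}$; $N/I=(N\setminus I)\cup\{\infty\}$. A prime ideal is an ideal $\mathfrak p\neq N$ such that $a+b\in\mathfrak p$ implies $a\in\mathfrak p$ or $b\in\mathfrak p$; the (combinatorial) dimension $\dim N$ is the supremum of the lengths $k$ of chains $\mathfrak p_0\subsetneq\cdots\subsetneq\mathfrak p_k$ of prime ideals. $\operatorname{HKF}(N,q)=\#N/[q]N_+$, with $\#S=|S|-1$ for a finite pointed set $S$, and $e_{HK}(N)=\lim_{q\to\infty}\operatorname{HKF}(N,q)/q^{\dim N}$ over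 all positive integers $q$, when it exists. *)

theory Defs
  imports Complex_Main "HOL-Library.Extended_Nat"
begin

record 'a binoid =
  bcarrier :: "'a set"
  badd :: "'a \<Rightarrow> 'a \<Rightarrow> 'a"
  bzero :: 'a
  binf :: 'a

definition is_binoid :: "'a binoid \<Rightarrow> bool" where
  "is_binoid B \<longleftrightarrow>
     bzero B \<in> bcarrier B \<and> binf B \<in> bcarrier B \<and>
     (\<forall>a\<in>bcarrier B. \<forall>b\<in>bcarrier B. badd B a b \<in> bcarrier B) \<and>
     (\<forall>a\<in>bcarrier B. \<forall>b\<in>bcarrier B. \<forall>c\<in>bcarrier B.
        badd B (badd B a b) c = badd B a (badd B b c)) \<and>
     (\<forall>a\<in>bcarrier B. \<forall>b\<in>bcarrier B. badd B a b = badd B b a) \<and>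
     (\<forall>a\<in>bcarrier B. badd B a (bzero B) = a) \<and>
     (\<forall>a\<in>bcarrier B. badd B a (binf B) = binf B)"

inductive_set bgen :: "'a binoid \<Rightarrow> 'a set \<Rightarrow> 'a set" for B G where
  zero: "bzero B \<in> bgen B G"
| gen: "g \<in> G \<Longrightarrow> g \<in> bgen B G"
| add: "a \<in> bgen B G \<Longrightarrow> b \<in> bgen B G \<Longrightarrow> badd B a b \<in> bgen B G"

definition fin_gen :: "'a binoid \<Rightarrow> bool" where
  "fin_gen B \<longleftrightarrow> (\<exists>G. finite G \<and> G \<subseteq> bcarrier B \<and> bgen B G = bcarrier B)"

definition bunits :: "'a binoid \<Rightarrow> 'a set" where
  "bunits B = {a \<in> bcarrier B. \<exists>b\<in>bcarrier B. badd B a b = bzero B}"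

definition bplus_part :: "'a binoid \<Rightarrow> 'a set" where
  "bplus_part B = bcarrier B - bunits B"

definition semipositive :: "'a binoid \<Rightarrow> bool" where
  "semipositive B \<longleftrightarrow> bcarrier B \<noteq> {binf B} \<and> finite (bunits B)"

definition is_ideal :: "'a binoid \<Rightarrow> 'a set \<Rightarrow> bool" where
  "is_ideal B I \<longleftrightarrow> I \<noteq> {} \<and> I \<subseteq> bcarrier B \<and>
     (\<forall>a\<in>I. \<forall>b\<in>bcarrier B. badd B a b \<in> I)"

definition is_prime_ideal :: "'a binoid \<Rightarrow> 'a set \<Rightarrow> bool" where
  "is_prime_ideal B P \<longleftrightarrow> is_ideal B P \<and> P \<noteq> bcarrier B \<and>
     (\<forall>a\<in>bcarrier B. \<forall>b\<in>bcarrier B. badd B a b \<in> P \<longrightarrow> a \<in> P \<or> b \<in> P)"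

definition bdim :: "'a binoid \<Rightarrow> enat" where
  "bdim B = Sup {enat k | k. \<exists>p :: nat \<Rightarrow> 'a set.
      (\<forall>i\<le>k. is_prime_ideal B (p i)) \<and> (\<forall>i<k. p i \<subset> p (Suc i))}"

definition bmult :: "'a binoid \<Rightarrow> nat \<Rightarrow> 'a \<Rightarrow> 'a" where
  "bmult B q a = (badd B a ^^ q) (bzero B)"

definition ideal_gen :: "'a binoid \<Rightarrow> 'a set \<Rightarrow> 'a set" where
  "ideal_gen B S = {badd B s n | s n. s \<in> S \<and> n \<in> bcarrier B}"

definition frob_ideal :: "'a binoid \<Rightarrow> nat \<Rightarrow> 'a set \<Rightarrow> 'a set" where
  "frob_ideal B q I = ideal_gen B (bmult B q ` I)"

text \<open>HKF(N,q) = #(N / [q]N_+), the pointed set N / I = (N \ I) \<union> {\<infinity>} with # S = |S| - 1.\<close>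
definition HKF :: "'a binoid \<Rightarrow> nat \<Rightarrow> nat" where
  "HKF B q = card ((bcarrier B - frob_ideal B q (bplus_part B)) \<union> {binf B}) - 1"

definition HK_ratio :: "'a binoid \<Rightarrow> nat \<Rightarrow> real" where
  "HK_ratio B q = real (HKF B q) / real q ^ the_enat (bdim B)"

definition ehk_exists :: "'a binoid \<Rightarrow> bool" where
  "ehk_exists B \<longleftrightarrow> convergent (HK_ratio B)"

definition ehk :: "'a binoid \<Rightarrow> real" where
  "ehk B = lim (HK_ratio B)"

text \<open>Smash product; None plays the role of \<infinity>.\<close>
definition smash :: "'a binoid \<Rightarrow> 'b binoid \<Rightarrow> ('a \<times> 'b) option binoid" where
  "smash M N =
    \<lparr> bcarrier = insert None (Some ` ((bcarrier M - {binf M}) \<times> (bcarrier N - {binf N}))),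
      badd = (\<lambda>x y. case (x, y) of
                 (Some (a, b), Some (c, d)) \<Rightarrow>
                    (if badd M a c \<noteq> binf M \<and> badd N b d \<noteq> binf N
                     then Some (badd M a c, badd N b d) else None)
               | _ \<Rightarrow> None),
      bzero = Some (bzero M, bzero N),
      binf = None \<rparr>"

end

theory Submission
  imports Defs
begin


lemma bz: "is_binoid B \<Longrightarrow> bzero B \<in> bcarrier B" unfolding is_binoid_def by blast
lemma bi: "is_binoid B \<Longrightarrow> binf B \<in> bcarrier B" unfolding is_binoid_def by blast
lemma bcl: "is_binoid B \<Longrightarrow> a \<in> bcarrier B \<Longrightarrow> b \<in> bcarrier B \<Longrightarrow> badd B a b \<in> bcarrier B"
  unfolding is_binoid_def by blast
lemma bassoc: "is_binoid B \<Longrightarrow> a \<in> bcarrier B \<Longrightarrow> b \<in> bcarrier B \<Longrightarrow> c \<in> bcarrier B \<Longrightarrow>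
   badd B (badd B a b) c = badd B a (badd B b c)"
  unfolding is_binoid_def by blast
lemma bcomm: "is_binoid B \<Longrightarrow> a \<in> bcarrier B \<Longrightarrow> b \<in> bcarrier B \<Longrightarrow> badd B a b = badd B b a"
  unfolding is_binoid_def by blast
lemma bzr: "is_binoid B \<Longrightarrow> a \<in> bcarrier B \<Longrightarrow> badd B a (bzero B) = a"
  unfolding is_binoid_def by blast
lemma bzl: "is_binoid B \<Longrightarrow> a \<in> bcarrier B \<Longrightarrow> badd B (bzero B) a = a"
  using bzr[of B a] bcomm[of B a "bzero B"] bz[of B] by simp
lemma bir: "is_binoid B \<Longrightarrow> a \<in> bcarrier B \<Longrightarrow> badd B a (binf B) = binf B"
  unfolding is_binoid_def by blast
lemma bil: "is_binoid B \<Longrightarrow> a \<in> bcarrier B \<Longrightarrow> badd B (binf B) a = binf B"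
  using bir[of B a] bcomm[of B a "binf B"] bi[of B] by simp
lemma bzi: assumes "is_binoid B" "bcarrier B \<noteq> {binf B}" shows "bzero B \<noteq> binf B"
proof
  assume h: "bzero B = binf B"
  have "\<forall>a\<in>bcarrier B. a = binf B"
  proof
    fix a assume a: "a \<in> bcarrier B"
    have "a = badd B a (bzero B)" using bzr[OF assms(1) a] by simp
    also have "\<dots> = binf B" using bir[OF assms(1) a] h by simp
    finally show "a = binf B" .
  qed
  then show False using assms bi by blast
qed

lemma ideal_inf: assumes "is_binoid B" "is_ideal B I" shows "binf B \<in> I"
proof -
  obtain x where x: "x \<in> I" using assms(2) unfolding is_ideal_def by blast
  have xc: "x \<in> bcarrier B" using x assms(2) unfolding is_ideal_def by blast
  have "badd B x (binf B) \<in> I" using x bi[OF assms(1)] assms(2) unfolding is_ideal_def by blast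
  then show ?thesis using bir[OF assms(1) xc] by simp
qed

lemma prime_zero: assumes "is_binoid B" "is_prime_ideal B P" shows "bzero B \<notin> P"
proof
  assume z: "bzero B \<in> P"
  have "bcarrier B \<subseteq> P"
  proof
    fix b assume b: "b \<in> bcarrier B"
    have "badd B (bzero B) b \<in> P" using z b assms(2) unfolding is_prime_ideal_def is_ideal_def by blast
    then show "b \<in> P" using bzl[OF assms(1) b] by simp
  qed
  then show False using assms unfolding is_prime_ideal_def is_ideal_def by blast
qed

lemma smash_carrier: "bcarrier (smash M N) = insert None (Some ` ((bcarrier M - {binf M}) \<times> (bcarrier N - {binf N})))"
  by (simp add: smash_def)
lemma smash_zero: "bzero (smash M N) = Some (bzero M, bzero N)" by (simp add: smash_def)
lemma smash_inf: "binf (smash M N) = None" by (simp add: smash_def)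
lemma smash_add1: "badd (smash M N) None y = None" by (simp add: smash_def)
lemma smash_add2: "badd (smash M N) x None = None" by (cases x) (auto simp add: smash_def)
lemma smash_add3: "badd (smash M N) (Some (a,b)) (Some (c,d)) =
  (if badd M a c \<noteq> binf M \<and> badd N b d \<noteq> binf N then Some (badd M a c, badd N b d) else None)"
  by (simp add: smash_def)

lemmas smash_simps = smash_carrier smash_zero smash_inf smash_add1 smash_add2 smash_add3

definition sprod :: "'a binoid \<Rightarrow> 'b binoid \<Rightarrow> 'a set \<Rightarrow> 'b set \<Rightarrow> ('a \<times> 'b) option set" where
  "sprod M N P Q = insert None (Some ` {(a,b). a \<in> bcarrier M - {binf M} \<and> b \<in> bcarrier N - {binf N} \<and> (a \<in> P \<or> b \<in> Q)})"
definition pr1 :: "'a binoid \<Rightarrow> 'b binoid \<Rightarrow> ('a \<times> 'b) option set \<Rightarrow> 'a set" where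
  "pr1 M N R = {a \<in> bcarrier M. a = binf M \<or> Some (a, bzero N) \<in> R}"
definition pr2 :: "'a binoid \<Rightarrow> 'b binoid \<Rightarrow> ('a \<times> 'b) option set \<Rightarrow> 'b set" where
  "pr2 M N R = {b \<in> bcarrier N. b = binf N \<or> Some (bzero M, b) \<in> R}"

locale sm =
  fixes M :: "'a binoid" and N :: "'b binoid"
  assumes M: "is_binoid M" and N: "is_binoid N"
    and M1: "bcarrier M \<noteq> {binf M}" and N1: "bcarrier N \<noteq> {binf N}"
begin

lemma zM: "bzero M \<noteq> binf M" using bzi M M1 by blast
lemma zN: "bzero N \<noteq> binf N" using bzi N N1 by blast

lemma smash_zl: assumes "y \<in> bcarrier (smash M N)" shows "badd (smash M N) (Some (bzero M, bzero N)) y = y"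
proof (cases y)
  case None then show ?thesis by (simp add: smash_simps)
next
  case (Some yy)
  then obtain a b where y: "y = Some (a,b)" by (cases yy) auto
  then have ab: "a \<in> bcarrier M" "a \<noteq> binf M" "b \<in> bcarrier N" "b \<noteq> binf N" using assms by (auto simp: smash_simps)
  have "badd M (bzero M) a = a" "badd N (bzero N) b = b" using bzl[OF M ab(1)] bzl[OF N ab(3)] .
  then show ?thesis using y ab by (simp add: smash_simps)
qed

lemma Rnone: assumes R: "is_prime_ideal (smash M N) R" shows "None \<in> R"
proof -
  obtain x where x: "x \<in> R" using R unfolding is_prime_ideal_def is_ideal_def by blast
  have "None \<in> bcarrier (smash M N)" by (simp add: smash_simps)
  then have "badd (smash M N) x None \<in> R" using x R unfolding is_prime_ideal_def is_ideal_def by blast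
  then show ?thesis by (simp add: smash_simps)
qed

lemma sprod_prime:
  assumes P: "is_prime_ideal M P" and Q: "is_prime_ideal N Q"
  shows "is_prime_ideal (smash M N) (sprod M N P Q)"
proof -
  have PC: "P \<subseteq> bcarrier M" "Q \<subseteq> bcarrier N" using P Q unfolding is_prime_ideal_def is_ideal_def by auto
  have Pi: "\<And>a b. a \<in> P \<Longrightarrow> b \<in> bcarrier M \<Longrightarrow> badd M a b \<in> P"
   and Qi: "\<And>a b. a \<in> Q \<Longrightarrow> b \<in> bcarrier N \<Longrightarrow> badd N a b \<in> Q"
    using P Q unfolding is_prime_ideal_def is_ideal_def by auto
  have Pp: "\<And>a b. a \<in> bcarrier M \<Longrightarrow> b \<in> bcarrier M \<Longrightarrow> badd M a b \<in> P \<Longrightarrow> a \<in> P \<or> b \<in> P"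
   and Qp: "\<And>a b. a \<in> bcarrier N \<Longrightarrow> b \<in> bcarrier N \<Longrightarrow> badd N a b \<in> Q \<Longrightarrow> a \<in> Q \<or> b \<in> Q"
    using P Q unfolding is_prime_ideal_def by auto
  have Pinf: "binf M \<in> P" using ideal_inf[OF M] P unfolding is_prime_ideal_def by blast
  have Qinf: "binf N \<in> Q" using ideal_inf[OF N] Q unfolding is_prime_ideal_def by blast
  have P0: "bzero M \<notin> P" using prime_zero[OF M P] .
  have Q0: "bzero N \<notin> Q" using prime_zero[OF N Q] .
  have ideal: "\<forall>x\<in>sprod M N P Q. \<forall>y\<in>bcarrier (smash M N). badd (smash M N) x y \<in> sprod M N P Q"
  proof (intro ballI)
    fix x y assume x: "x \<in> sprod M N P Q" and y: "y \<in> bcarrier (smash M N)"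
    show "badd (smash M N) x y \<in> sprod M N P Q"
    proof (cases x)
      case None then show ?thesis by (simp add: smash_simps sprod_def)
    next
      case (Some xx)
      then obtain a b where xab: "x = Some (a,b)" by (cases xx) auto
      show ?thesis
      proof (cases y)
        case None then show ?thesis by (simp add: smash_simps sprod_def)
      next
        case (Some yy)
        then obtain c d where ycd: "y = Some (c,d)" by (cases yy) auto
        have ab: "a \<in> bcarrier M" "a \<noteq> binf M" "b \<in> bcarrier N" "b \<noteq> binf N" "a \<in> P \<or> b \<in> Q"
          using x xab unfolding sprod_def by auto
        have cd: "c \<in> bcarrier M" "d \<in> bcarrier N" using y ycd by (auto simp: smash_simps)
        show ?thesis using ab cd Pi Qi bcl[OF M] bcl[OF N]
          by (auto simp add: xab ycd smash_simps sprod_def)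
      qed
    qed
  qed
  have sub: "sprod M N P Q \<subseteq> bcarrier (smash M N)" unfolding sprod_def smash_carrier by auto
  have ne: "sprod M N P Q \<noteq> bcarrier (smash M N)"
  proof
    assume "sprod M N P Q = bcarrier (smash M N)"
    moreover have "Some (bzero M, bzero N) \<in> bcarrier (smash M N)"
      using zM zN bz[OF M] bz[OF N] by (simp add: smash_simps)
    ultimately show False using P0 Q0 unfolding sprod_def by auto
  qed
  have prime: "\<forall>x\<in>bcarrier (smash M N). \<forall>y\<in>bcarrier (smash M N).
      badd (smash M N) x y \<in> sprod M N P Q \<longrightarrow> x \<in> sprod M N P Q \<or> y \<in> sprod M N P Q"
  proof (intro ballI impI)
    fix x y assume x: "x \<in> bcarrier (smash M N)" and y: "y \<in> bcarrier (smash M N)"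
      and s: "badd (smash M N) x y \<in> sprod M N P Q"
    show "x \<in> sprod M N P Q \<or> y \<in> sprod M N P Q"
    proof (cases "x = None \<or> y = None")
      case True then show ?thesis by (auto simp: sprod_def)
    next
      case False
      then obtain a b c d where xab: "x = Some (a,b)" and ycd: "y = Some (c,d)" by auto
      have ab: "a \<in> bcarrier M" "a \<noteq> binf M" "b \<in> bcarrier N" "b \<noteq> binf N"
        and cd: "c \<in> bcarrier M" "c \<noteq> binf M" "d \<in> bcarrier N" "d \<noteq> binf N"
        using x y xab ycd by (auto simp: smash_simps)
      show ?thesis
      proof (cases "badd M a c \<noteq> binf M \<and> badd N b d \<noteq> binf N")
        case True
        then have "Some (badd M a c, badd N b d) \<in> sprod M N P Q" using s by (simp add: xab ycd smash_simps)
        then have "badd M a c \<in> P \<or> badd N b d \<in> Q" unfolding sprod_def by blast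
        then have "a \<in> P \<or> c \<in> P \<or> b \<in> Q \<or> d \<in> Q" using Pp Qp ab cd by blast
        then show ?thesis using ab cd by (auto simp: xab ycd sprod_def)
      next
        case False
        then have "badd M a c \<in> P \<or> badd N b d \<in> Q" using Pinf Qinf by auto
        then have "a \<in> P \<or> c \<in> P \<or> b \<in> Q \<or> d \<in> Q" using Pp Qp ab cd by blast
        then show ?thesis using ab cd by (auto simp: xab ycd sprod_def)
      qed
    qed
  qed
  have nem: "sprod M N P Q \<noteq> {}" unfolding sprod_def by blast
  show ?thesis unfolding is_prime_ideal_def is_ideal_def using nem sub ideal ne prime by (intro conjI) assumption+
qed


lemma pr1_prime:
  assumes R: "is_prime_ideal (smash M N) R"
  shows "is_prime_ideal M (pr1 M N R)"
proof -
  let ?S = "smash M N"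
  have RC: "R \<subseteq> bcarrier ?S" using R unfolding is_prime_ideal_def is_ideal_def by blast
  have Ri: "\<And>x y. x \<in> R \<Longrightarrow> y \<in> bcarrier ?S \<Longrightarrow> badd ?S x y \<in> R"
    using R unfolding is_prime_ideal_def is_ideal_def by blast
  have Rp: "\<And>x y. x \<in> bcarrier ?S \<Longrightarrow> y \<in> bcarrier ?S \<Longrightarrow> badd ?S x y \<in> R \<Longrightarrow> x \<in> R \<or> y \<in> R"
    using R unfolding is_prime_ideal_def by blast
  have Rinf: "None \<in> R" using Rnone[OF R] .
  have z0: "badd N (bzero N) (bzero N) = bzero N" using bzr[OF N bz[OF N]] .
  have SC: "\<And>a. a \<in> bcarrier M \<Longrightarrow> a \<noteq> binf M \<Longrightarrow> Some (a, bzero N) \<in> bcarrier ?S"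
    using bz[OF N] zN by (simp add: smash_simps)
  have R0: "Some (bzero M, bzero N) \<notin> R"
  proof
    assume h: "Some (bzero M, bzero N) \<in> R"
    have "bcarrier ?S \<subseteq> R"
    proof
      fix y assume y: "y \<in> bcarrier ?S"
      then have "badd ?S (Some (bzero M, bzero N)) y = y" by (rule smash_zl)
      then show "y \<in> R" using Ri[OF h y] by simp
    qed
    moreover have "Some (bzero M, bzero N) \<in> bcarrier ?S" using SC bz[OF M] zM by blast
    ultimately show False using R unfolding is_prime_ideal_def is_ideal_def by blast
  qed
  have ideal: "\<forall>a\<in>pr1 M N R. \<forall>b\<in>bcarrier M. badd M a b \<in> pr1 M N R"
  proof (intro ballI)
    fix a b assume a: "a \<in> pr1 M N R" and b: "b \<in> bcarrier M"
    have aC: "a \<in> bcarrier M" using a unfolding pr1_def by auto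
    show "badd M a b \<in> pr1 M N R"
    proof (cases "badd M a b = binf M")
      case True then show ?thesis using bi[OF M] unfolding pr1_def by auto
    next
      case False
      then have an: "a \<noteq> binf M" using bil[OF M b] by auto
      have bn: "b \<noteq> binf M" using False bir[OF M aC] by auto
      have "Some (a, bzero N) \<in> R" using a an unfolding pr1_def by auto
      then have "badd ?S (Some (a, bzero N)) (Some (b, bzero N)) \<in> R" using Ri SC[OF b bn] by blast
      then have "Some (badd M a b, bzero N) \<in> R" using False z0 zN by (simp add: smash_simps)
      then show ?thesis using bcl[OF M aC b] unfolding pr1_def by auto
    qed
  qed
  have prime: "\<forall>a\<in>bcarrier M. \<forall>b\<in>bcarrier M. badd M a b \<in> pr1 M N R \<longrightarrow> a \<in> pr1 M N R \<or> b \<in> pr1 M N R"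
  proof (intro ballI impI)
    fix a b assume a: "a \<in> bcarrier M" and b: "b \<in> bcarrier M" and ab: "badd M a b \<in> pr1 M N R"
    show "a \<in> pr1 M N R \<or> b \<in> pr1 M N R"
    proof (cases "a = binf M \<or> b = binf M")
      case True then show ?thesis using a b unfolding pr1_def by auto
    next
      case False
      then have an: "a \<noteq> binf M" and bn: "b \<noteq> binf M" by auto
      have "badd ?S (Some (a, bzero N)) (Some (b, bzero N)) \<in> R"
      proof (cases "badd M a b = binf M")
        case True then show ?thesis using Rinf by (simp add: smash_simps)
      next
        case False
        then have "Some (badd M a b, bzero N) \<in> R" using ab unfolding pr1_def by auto
        then show ?thesis using False z0 zN by (simp add: smash_simps)
      qed
      then have "Some (a, bzero N) \<in> R \<or> Some (b, bzero N) \<in> R" using Rp SC[OF a an] SC[OF b bn] by blast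
      then show ?thesis using a b unfolding pr1_def by auto
    qed
  qed
  have ne: "pr1 M N R \<noteq> bcarrier M"
    using R0 bz[OF M] zM unfolding pr1_def by auto
  have sub: "pr1 M N R \<subseteq> bcarrier M" unfolding pr1_def by auto
  have nem: "pr1 M N R \<noteq> {}" using bi[OF M] unfolding pr1_def by auto
  show ?thesis unfolding is_prime_ideal_def is_ideal_def using nem sub ideal ne prime by (intro conjI) assumption+
qed

lemma pr2_prime:
  assumes R: "is_prime_ideal (smash M N) R"
  shows "is_prime_ideal N (pr2 M N R)"
proof -
  let ?S = "smash M N"
  have RC: "R \<subseteq> bcarrier ?S" using R unfolding is_prime_ideal_def is_ideal_def by blast
  have Ri: "\<And>x y. x \<in> R \<Longrightarrow> y \<in> bcarrier ?S \<Longrightarrow> badd ?S x y \<in> R"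
    using R unfolding is_prime_ideal_def is_ideal_def by blast
  have Rp: "\<And>x y. x \<in> bcarrier ?S \<Longrightarrow> y \<in> bcarrier ?S \<Longrightarrow> badd ?S x y \<in> R \<Longrightarrow> x \<in> R \<or> y \<in> R"
    using R unfolding is_prime_ideal_def by blast
  have Rinf: "None \<in> R" using Rnone[OF R] .
  have z0: "badd M (bzero M) (bzero M) = bzero M" using bzr[OF M bz[OF M]] .
  have SC: "\<And>a. a \<in> bcarrier N \<Longrightarrow> a \<noteq> binf N \<Longrightarrow> Some (bzero M, a) \<in> bcarrier ?S"
    using bz[OF M] zM by (simp add: smash_simps)
  have R0: "Some (bzero M, bzero N) \<notin> R"
  proof
    assume h: "Some (bzero M, bzero N) \<in> R"
    have "bcarrier ?S \<subseteq> R"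
    proof
      fix y assume y: "y \<in> bcarrier ?S"
      then have "badd ?S (Some (bzero M, bzero N)) y = y" by (rule smash_zl)
      then show "y \<in> R" using Ri[OF h y] by simp
    qed
    moreover have "Some (bzero M, bzero N) \<in> bcarrier ?S" using SC bz[OF N] zN by blast
    ultimately show False using R unfolding is_prime_ideal_def is_ideal_def by blast
  qed
  have ideal: "\<forall>a\<in>pr2 M N R. \<forall>b\<in>bcarrier N. badd N a b \<in> pr2 M N R"
  proof (intro ballI)
    fix a b assume a: "a \<in> pr2 M N R" and b: "b \<in> bcarrier N"
    have aC: "a \<in> bcarrier N" using a unfolding pr2_def by auto
    show "badd N a b \<in> pr2 M N R"
    proof (cases "badd N a b = binf N")
      case True then show ?thesis using bi[OF N] unfolding pr2_def by auto
    next
      case False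
      then have an: "a \<noteq> binf N" using bil[OF N b] by auto
      have bn: "b \<noteq> binf N" using False bir[OF N aC] by auto
      have "Some (bzero M, a) \<in> R" using a an unfolding pr2_def by auto
      then have "badd ?S (Some (bzero M, a)) (Some (bzero M, b)) \<in> R" using Ri SC[OF b bn] by blast
      then have "Some (bzero M, badd N a b) \<in> R" using False z0 zM by (simp add: smash_simps)
      then show ?thesis using bcl[OF N aC b] unfolding pr2_def by auto
    qed
  qed
  have prime: "\<forall>a\<in>bcarrier N. \<forall>b\<in>bcarrier N. badd N a b \<in> pr2 M N R \<longrightarrow> a \<in> pr2 M N R \<or> b \<in> pr2 M N R"
  proof (intro ballI impI)
    fix a b assume a: "a \<in> bcarrier N" and b: "b \<in> bcarrier N" and ab: "badd N a b \<in> pr2 M N R"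
    show "a \<in> pr2 M N R \<or> b \<in> pr2 M N R"
    proof (cases "a = binf N \<or> b = binf N")
      case True then show ?thesis using a b unfolding pr2_def by auto
    next
      case False
      then have an: "a \<noteq> binf N" and bn: "b \<noteq> binf N" by auto
      have "badd ?S (Some (bzero M, a)) (Some (bzero M, b)) \<in> R"
      proof (cases "badd N a b = binf N")
        case True then show ?thesis using Rinf by (simp add: smash_simps)
      next
        case False
        then have "Some (bzero M, badd N a b) \<in> R" using ab unfolding pr2_def by auto
        then show ?thesis using False z0 zM by (simp add: smash_simps)
      qed
      then have "Some (bzero M, a) \<in> R \<or> Some (bzero M, b) \<in> R" using Rp SC[OF a an] SC[OF b bn] by blast
      then show ?thesis using a b unfolding pr2_def by auto
    qed
  qed
  have ne: "pr2 M N R \<noteq> bcarrier N"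
    using R0 bz[OF N] zN unfolding pr2_def by auto
  have sub: "pr2 M N R \<subseteq> bcarrier N" unfolding pr2_def by auto
  have nem: "pr2 M N R \<noteq> {}" using bi[OF N] unfolding pr2_def by auto
  show ?thesis unfolding is_prime_ideal_def is_ideal_def using nem sub ideal ne prime by (intro conjI) assumption+
qed

lemma decomp:
  assumes R: "is_prime_ideal (smash M N) R"
  shows "R = sprod M N (pr1 M N R) (pr2 M N R)"
proof -
  let ?S = "smash M N"
  have RC: "R \<subseteq> bcarrier ?S" using R unfolding is_prime_ideal_def is_ideal_def by blast
  have Ri: "\<And>x y. x \<in> R \<Longrightarrow> y \<in> bcarrier ?S \<Longrightarrow> badd ?S x y \<in> R"
    using R unfolding is_prime_ideal_def is_ideal_def by blast
  have Rp: "\<And>x y. x \<in> bcarrier ?S \<Longrightarrow> y \<in> bcarrier ?S \<Longrightarrow> badd ?S x y \<in> R \<Longrightarrow> x \<in> R \<or> y \<in> R"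
    using R unfolding is_prime_ideal_def by blast
  have Rinf: "None \<in> R" using Rnone[OF R] .
  have split: "\<And>a b. a \<in> bcarrier M \<Longrightarrow> a \<noteq> binf M \<Longrightarrow> b \<in> bcarrier N \<Longrightarrow> b \<noteq> binf N \<Longrightarrow>
     badd ?S (Some (a, bzero N)) (Some (bzero M, b)) = Some (a, b)"
    using bzr[OF M] bzl[OF N] by (simp add: smash_simps)
  have SC1: "\<And>a. a \<in> bcarrier M \<Longrightarrow> a \<noteq> binf M \<Longrightarrow> Some (a, bzero N) \<in> bcarrier ?S"
    using bz[OF N] zN by (simp add: smash_simps)
  have SC2: "\<And>a. a \<in> bcarrier N \<Longrightarrow> a \<noteq> binf N \<Longrightarrow> Some (bzero M, a) \<in> bcarrier ?S"
    using bz[OF M] zM by (simp add: smash_simps)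
  show ?thesis
  proof (rule set_eqI)
    fix x show "x \<in> R \<longleftrightarrow> x \<in> sprod M N (pr1 M N R) (pr2 M N R)"
    proof (cases x)
      case None then show ?thesis using Rinf by (simp add: sprod_def)
    next
      case (Some xx)
      show ?thesis
      proof
        assume x: "x \<in> R"
        then obtain a b where xab: "x = Some (a,b)" and ab: "a \<in> bcarrier M" "a \<noteq> binf M" "b \<in> bcarrier N" "b \<noteq> binf N"
          using RC Some by (cases xx) (auto simp: smash_simps)
        have "Some (a, bzero N) \<in> R \<or> Some (bzero M, b) \<in> R"
          using Rp[OF SC1[OF ab(1,2)] SC2[OF ab(3,4)]] split[OF ab] x xab by simp
        then show "x \<in> sprod M N (pr1 M N R) (pr2 M N R)"
          using ab xab unfolding sprod_def pr1_def pr2_def by auto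
      next
        assume x: "x \<in> sprod M N (pr1 M N R) (pr2 M N R)"
        then obtain a b where xab: "x = Some (a,b)" and ab: "a \<in> bcarrier M" "a \<noteq> binf M" "b \<in> bcarrier N" "b \<noteq> binf N"
          and h: "a \<in> pr1 M N R \<or> b \<in> pr2 M N R"
          using Some unfolding sprod_def by auto
        from h show "x \<in> R"
        proof
          assume "a \<in> pr1 M N R"
          then have "Some (a, bzero N) \<in> R" using ab unfolding pr1_def by auto
          then show ?thesis using Ri[OF _ SC2[OF ab(3,4)]] split[OF ab] xab by metis
        next
          assume "b \<in> pr2 M N R"
          then have "Some (bzero M, b) \<in> R" using ab unfolding pr2_def by auto
          then have "badd ?S (Some (bzero M, b)) (Some (a, bzero N)) \<in> R" using Ri[OF _ SC1[OF ab(1,2)]] by blast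
          moreover have "badd ?S (Some (bzero M, b)) (Some (a, bzero N)) = Some (a,b)"
            using ab bzl[OF M] bzr[OF N] by (simp add: smash_simps)
          ultimately show ?thesis using xab by simp
        qed
      qed
    qed
  qed
qed

lemma pr1_sprod:
  assumes P: "is_prime_ideal M P" and Q: "is_prime_ideal N Q"
  shows "pr1 M N (sprod M N P Q) = P"
proof -
  have "binf M \<in> P" using ideal_inf[OF M] P unfolding is_prime_ideal_def by blast
  moreover have "P \<subseteq> bcarrier M" using P unfolding is_prime_ideal_def is_ideal_def by auto
  moreover have "bzero N \<notin> Q" using prime_zero[OF N Q] .
  ultimately show ?thesis using bz[OF N] zN unfolding pr1_def sprod_def by auto
qed

lemma pr2_sprod:
  assumes P: "is_prime_ideal M P" and Q: "is_prime_ideal N Q"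
  shows "pr2 M N (sprod M N P Q) = Q"
proof -
  have "binf N \<in> Q" using ideal_inf[OF N] Q unfolding is_prime_ideal_def by blast
  moreover have "Q \<subseteq> bcarrier N" using Q unfolding is_prime_ideal_def is_ideal_def by auto
  moreover have "bzero M \<notin> P" using prime_zero[OF M P] .
  ultimately show ?thesis using bz[OF M] zM unfolding pr2_def sprod_def by auto
qed

lemma sprod_mono: "P \<subseteq> P' \<Longrightarrow> Q \<subseteq> Q' \<Longrightarrow> sprod M N P Q \<subseteq> sprod M N P' Q'"
  unfolding sprod_def by auto

lemma pr1_mono: "R \<subseteq> R' \<Longrightarrow> pr1 M N R \<subseteq> pr1 M N R'" unfolding pr1_def by auto
lemma pr2_mono: "R \<subseteq> R' \<Longrightarrow> pr2 M N R \<subseteq> pr2 M N R'" unfolding pr2_def by auto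

end


definition pchain :: "'a binoid \<Rightarrow> (nat \<Rightarrow> 'a set) \<Rightarrow> nat \<Rightarrow> bool" where
  "pchain B p k \<longleftrightarrow> (\<forall>i\<le>k. is_prime_ideal B (p i)) \<and> (\<forall>i<k. p i \<subset> p (Suc i))"

lemma bdim_alt: "bdim B = Sup {enat k | k. \<exists>p. pchain B p k}"
  by (simp add: bdim_def pchain_def)

lemma bplus_prime:
  assumes B: "is_binoid B" and B1: "bcarrier B \<noteq> {binf B}"
  shows "is_prime_ideal B (bplus_part B)"
proof -
  have z: "bzero B \<noteq> binf B" using bzi[OF B B1] .
  have infnu: "binf B \<notin> bunits B"
    using z bil[OF B] unfolding bunits_def by auto
  have zu: "bzero B \<in> bunits B" using bz[OF B] bzr[OF B bz[OF B]] unfolding bunits_def by auto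
  have ideal: "\<forall>a\<in>bplus_part B. \<forall>b\<in>bcarrier B. badd B a b \<in> bplus_part B"
  proof (intro ballI)
    fix a b assume a: "a \<in> bplus_part B" and b: "b \<in> bcarrier B"
    have aC: "a \<in> bcarrier B" and an: "a \<notin> bunits B" using a unfolding bplus_part_def by auto
    have "badd B a b \<notin> bunits B"
    proof
      assume "badd B a b \<in> bunits B"
      then obtain c where c: "c \<in> bcarrier B" "badd B (badd B a b) c = bzero B" unfolding bunits_def by auto
      then have "badd B a (badd B b c) = bzero B" using bassoc[OF B aC b c(1)] by simp
      moreover have "badd B b c \<in> bcarrier B" using bcl[OF B b c(1)] .
      ultimately have "a \<in> bunits B" using aC unfolding bunits_def by auto
      then show False using an by simp
    qed
    then show "badd B a b \<in> bplus_part B" using bcl[OF B aC b] unfolding bplus_part_def by auto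
  qed
  have prime: "\<forall>a\<in>bcarrier B. \<forall>b\<in>bcarrier B. badd B a b \<in> bplus_part B \<longrightarrow> a \<in> bplus_part B \<or> b \<in> bplus_part B"
  proof (intro ballI impI)
    fix a b assume a: "a \<in> bcarrier B" and b: "b \<in> bcarrier B" and ab: "badd B a b \<in> bplus_part B"
    show "a \<in> bplus_part B \<or> b \<in> bplus_part B"
    proof (rule ccontr)
      assume "\<not> ?thesis"
      then have "a \<in> bunits B" "b \<in> bunits B" using a b unfolding bplus_part_def by auto
      then obtain c d where c: "c \<in> bcarrier B" "badd B a c = bzero B" and d: "d \<in> bcarrier B" "badd B b d = bzero B"
        unfolding bunits_def by auto
      have "badd B (badd B a b) (badd B c d) = badd B a (badd B b (badd B d c))"
        using bassoc[OF B a b bcl[OF B c(1) d(1)]] bcomm[OF B c(1) d(1)] by simp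
      also have "\<dots> = badd B a (badd B (badd B b d) c)" using bassoc[OF B b d(1) c(1)] by simp
      also have "\<dots> = bzero B" using d(2) bzl[OF B c(1)] c(2) by simp
      finally have "badd B a b \<in> bunits B" using bcl[OF B a b] bcl[OF B c(1) d(1)] unfolding bunits_def by auto
      then show False using ab unfolding bplus_part_def by auto
    qed
  qed
  have sub: "bplus_part B \<subseteq> bcarrier B" unfolding bplus_part_def by auto
  have nem: "bplus_part B \<noteq> {}" using bi[OF B] infnu unfolding bplus_part_def by auto
  have ne: "bplus_part B \<noteq> bcarrier B" using zu bz[OF B] unfolding bplus_part_def by auto
  show ?thesis unfolding is_prime_ideal_def is_ideal_def using nem sub ideal ne prime by (intro conjI) assumption+
qed

lemma fin_dim:
  assumes B: "is_binoid B" and B1: "bcarrier B \<noteq> {binf B}" and D: "bdim B \<noteq> \<infinity>"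
  shows "\<exists>d. bdim B = enat d \<and> (\<exists>p. pchain B p d) \<and> (\<forall>p k. pchain B p k \<longrightarrow> k \<le> d)"
proof -
  let ?A = "{enat k | k. \<exists>p. pchain B p k}"
  have "pchain B (\<lambda>_. bplus_part B) 0" using bplus_prime[OF B B1] unfolding pchain_def by auto
  then have ne: "?A \<noteq> {}" by blast
  have fin: "finite ?A" using D ne unfolding bdim_alt Sup_enat_def by (auto split: if_splits)
  have eq: "bdim B = Max ?A" using fin ne unfolding bdim_alt Sup_enat_def by auto
  have "Max ?A \<in> ?A" using Max_in[OF fin ne] .
  then obtain d p where d: "Max ?A = enat d" "pchain B p d" by blast
  have all: "\<forall>q k. pchain B q k \<longrightarrow> k \<le> d"
  proof (intro allI impI)
    fix q k assume "pchain B q k"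
    then have "enat k \<in> ?A" by blast
    then have "enat k \<le> Max ?A" using Max_ge[OF fin] by blast
    then show "k \<le> d" using d(1) by simp
  qed
  show ?thesis
  proof (intro exI[of _ d] conjI)
    show "bdim B = enat d" using eq d(1) by simp
    show "\<exists>p. pchain B p d" using d(2) by blast
    show "\<forall>p k. pchain B p k \<longrightarrow> k \<le> d" using all by blast
  qed
qed

context sm begin

lemma sprod_strict:
  assumes P: "is_prime_ideal M P" "is_prime_ideal M P'" and Q: "is_prime_ideal N Q" "is_prime_ideal N Q'"
    and "P \<subseteq> P'" "Q \<subseteq> Q'" "P \<noteq> P' \<or> Q \<noteq> Q'"
  shows "sprod M N P Q \<subset> sprod M N P' Q'"
proof -
  have "sprod M N P Q \<subseteq> sprod M N P' Q'" using sprod_mono assms by blast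
  moreover have "sprod M N P Q \<noteq> sprod M N P' Q'"
    using pr1_sprod[OF P(1) Q(1)] pr1_sprod[OF P(2) Q(2)] pr2_sprod[OF P(1) Q(1)] pr2_sprod[OF P(2) Q(2)] assms(7)
    by metis
  ultimately show ?thesis by blast
qed

lemma chain_upper:
  "pchain (smash M N) r k \<Longrightarrow> \<exists>a b p p'. pchain M p a \<and> pchain N p' b \<and> a + b = k \<and>
      p a \<subseteq> pr1 M N (r k) \<and> p' b \<subseteq> pr2 M N (r k)"
proof (induction k)
  case 0
  then have R: "is_prime_ideal (smash M N) (r 0)" unfolding pchain_def by auto
  have "pchain M (\<lambda>_. pr1 M N (r 0)) 0" "pchain N (\<lambda>_. pr2 M N (r 0)) 0"
    using pr1_prime[OF R] pr2_prime[OF R] unfolding pchain_def by auto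
  then show ?case by fastforce
next
  case (Suc k)
  have ck: "pchain (smash M N) r k" using Suc.prems unfolding pchain_def by auto
  obtain a b p p' where ih: "pchain M p a" "pchain N p' b" "a + b = k"
    "p a \<subseteq> pr1 M N (r k)" "p' b \<subseteq> pr2 M N (r k)" using Suc.IH[OF ck] by blast
  have R: "is_prime_ideal (smash M N) (r k)" and R': "is_prime_ideal (smash M N) (r (Suc k))"
    and lt: "r k \<subset> r (Suc k)" using Suc.prems unfolding pchain_def by auto
  have m1: "pr1 M N (r k) \<subseteq> pr1 M N (r (Suc k))" and m2: "pr2 M N (r k) \<subseteq> pr2 M N (r (Suc k))"
    using pr1_mono pr2_mono lt by auto
  have "pr1 M N (r k) \<noteq> pr1 M N (r (Suc k)) \<or> pr2 M N (r k) \<noteq> pr2 M N (r (Suc k))"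
  proof (rule ccontr)
    assume "\<not> ?thesis"
    then have "pr1 M N (r k) = pr1 M N (r (Suc k))" "pr2 M N (r k) = pr2 M N (r (Suc k))" by auto
    then have "r k = r (Suc k)" using decomp[OF R] decomp[OF R'] by simp
    then show False using lt by simp
  qed
  then show ?case
  proof
    assume ne: "pr1 M N (r k) \<noteq> pr1 M N (r (Suc k))"
    let ?p = "p(Suc a := pr1 M N (r (Suc k)))"
    have "pchain M ?p (Suc a)"
      using ih(1,4) m1 ne pr1_prime[OF R'] unfolding pchain_def
      by (auto simp: le_Suc_eq less_Suc_eq)
    moreover have "p' b \<subseteq> pr2 M N (r (Suc k))" using ih(5) m2 by auto
    ultimately have "pchain M ?p (Suc a) \<and> pchain N p' b \<and> Suc a + b = Suc k \<and>
        ?p (Suc a) \<subseteq> pr1 M N (r (Suc k)) \<and> p' b \<subseteq> pr2 M N (r (Suc k))" using ih(2,3) by simp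
    then show ?thesis by blast
  next
    assume ne: "pr2 M N (r k) \<noteq> pr2 M N (r (Suc k))"
    let ?p = "p'(Suc b := pr2 M N (r (Suc k)))"
    have "pchain N ?p (Suc b)"
      using ih(2,5) m2 ne pr2_prime[OF R'] unfolding pchain_def
      by (auto simp: le_Suc_eq less_Suc_eq)
    moreover have "p a \<subseteq> pr1 M N (r (Suc k))" using ih(4) m1 by auto
    ultimately have "pchain M p a \<and> pchain N ?p (Suc b) \<and> a + Suc b = Suc k \<and>
        p a \<subseteq> pr1 M N (r (Suc k)) \<and> ?p (Suc b) \<subseteq> pr2 M N (r (Suc k))" using ih(1,3) by simp
    then show ?thesis by blast
  qed
qed

lemma chain_lower:
  assumes p: "pchain M p a" and q: "pchain N q b"
  shows "pchain (smash M N) (\<lambda>i. if i \<le> a then sprod M N (p i) (q 0) else sprod M N (p a) (q (i - a))) (a + b)"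
proof -
  have pp: "\<And>i. i \<le> a \<Longrightarrow> is_prime_ideal M (p i)" and pl: "\<And>i. i < a \<Longrightarrow> p i \<subset> p (Suc i)"
    using p unfolding pchain_def by auto
  have qp: "\<And>i. i \<le> b \<Longrightarrow> is_prime_ideal N (q i)" and ql: "\<And>i. i < b \<Longrightarrow> q i \<subset> q (Suc i)"
    using q unfolding pchain_def by auto
  show ?thesis unfolding pchain_def
  proof (intro conjI allI impI)
    fix i assume i: "i \<le> a + b"
    show "is_prime_ideal (smash M N) (if i \<le> a then sprod M N (p i) (q 0) else sprod M N (p a) (q (i - a)))"
      using sprod_prime pp qp i by auto
  next
    fix i assume i: "i < a + b"
    show "(if i \<le> a then sprod M N (p i) (q 0) else sprod M N (p a) (q (i - a))) \<subset>
          (if Suc i \<le> a then sprod M N (p (Suc i)) (q 0) else sprod M N (p a) (q (Suc i - a)))"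
    proof (cases "Suc i \<le> a")
      case True
      then show ?thesis using sprod_strict[OF pp[of i] pp[of "Suc i"] qp[of 0] qp[of 0]] pl[of i] by auto
    next
      case False
      show ?thesis
      proof (cases "i \<le> a")
        case True
        then have ia: "i = a" using False by auto
        have "sprod M N (p a) (q 0) \<subset> sprod M N (p a) (q 1)"
          using sprod_strict[OF pp[of a] pp[of a] qp[of 0] qp[of 1]] ql[of 0] i ia by auto
        then show ?thesis using ia by simp
      next
        case F2: False
        have e: "Suc i - a = Suc (i - a)" using F2 by auto
        have l: "i - a < b" using i F2 by linarith
        have ql': "q (i - a) \<subset> q (Suc (i - a))" using ql[OF l] .
        have "sprod M N (p a) (q (i - a)) \<subset> sprod M N (p a) (q (Suc (i - a)))"
          using sprod_strict[OF pp[of a] pp[of a] qp[of "i - a"] qp[of "Suc (i - a)"]] ql' l by auto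
        then show ?thesis using False F2 e by simp
      qed
    qed
  qed
qed

lemma dim_smash:
  assumes DM: "bdim M = enat dM" and DN: "bdim N = enat dN"
  shows "bdim (smash M N) = enat (dM + dN)"
proof -
  obtain dM' where m: "bdim M = enat dM'" "\<exists>p. pchain M p dM'" "\<forall>p k. pchain M p k \<longrightarrow> k \<le> dM'"
    using fin_dim[OF M M1] DM by auto
  obtain dN' where n: "bdim N = enat dN'" "\<exists>p. pchain N p dN'" "\<forall>p k. pchain N p k \<longrightarrow> k \<le> dN'"
    using fin_dim[OF N N1] DN by auto
  have e: "dM' = dM" "dN' = dN" using m(1) n(1) DM DN by auto
  let ?A = "{enat k | k. \<exists>p. pchain (smash M N) p k}"
  have up: "\<And>x. x \<in> ?A \<Longrightarrow> x \<le> enat (dM + dN)"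
  proof -
    fix x assume "x \<in> ?A"
    then obtain k r where x: "x = enat k" "pchain (smash M N) r k" by blast
    obtain a b p p' where "pchain M p a" "pchain N p' b" "a + b = k" using chain_upper[OF x(2)] by blast
    then have "k \<le> dM + dN" using m(3) n(3) e by fastforce
    then show "x \<le> enat (dM + dN)" using x by simp
  qed
  obtain p q where "pchain M p dM" "pchain N q dN" using m(2) n(2) e by auto
  then have inA: "enat (dM + dN) \<in> ?A" using chain_lower by blast
  have fin: "finite ?A"
  proof (rule finite_subset)
    show "?A \<subseteq> enat ` {..dM + dN}"
    proof
      fix x assume x: "x \<in> ?A"
      then obtain k where k: "x = enat k" by blast
      have "x \<le> enat (dM + dN)" using up[OF x] .
      then show "x \<in> enat ` {..dM + dN}" using k by auto
    qed
  qed simp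
  have "Max ?A = enat (dM + dN)"
    using up inA fin by (intro Max_eqI) auto
  then show ?thesis unfolding bdim_alt Sup_enat_def using fin inA by auto
qed

end


lemma bmult_0: "bmult B 0 a = bzero B" by (simp add: bmult_def)
lemma bmult_Suc: "bmult B (Suc q) a = badd B a (bmult B q a)" by (simp add: bmult_def)

lemma bmult_cl: "is_binoid B \<Longrightarrow> a \<in> bcarrier B \<Longrightarrow> bmult B q a \<in> bcarrier B"
  by (induction q) (auto simp: bmult_0 bmult_Suc bz bcl)

lemma bmult_inf: "is_binoid B \<Longrightarrow> q \<ge> 1 \<Longrightarrow> bmult B q (binf B) = binf B"
proof (induction q)
  case 0 then show ?case by simp
next
  case (Suc q) then show ?case using bil[OF Suc.prems(1) bmult_cl[OF Suc.prems(1) bi[OF Suc.prems(1)]]]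
    by (simp add: bmult_Suc)
qed

lemma bmult_zero: "is_binoid B \<Longrightarrow> bmult B q (bzero B) = bzero B"
  by (induction q) (auto simp: bmult_0 bmult_Suc bzr bz)

lemma card_ins_minus: "x \<notin> A \<Longrightarrow> card (A \<union> {x}) - 1 = card A"
  by (cases "finite A") auto

lemma HKF_alt: assumes "binf B \<in> frob_ideal B q (bplus_part B)"
  shows "HKF B q = card (bcarrier B - frob_ideal B q (bplus_part B))"
  unfolding HKF_def using assms by (intro card_ins_minus) auto

lemma frob_idealI: "c \<in> I \<Longrightarrow> n \<in> bcarrier B \<Longrightarrow> x = badd B (bmult B q c) n \<Longrightarrow> x \<in> frob_ideal B q I"
  unfolding frob_ideal_def ideal_gen_def by blast

lemma inf_frob: assumes B: "is_binoid B" and B1: "bcarrier B \<noteq> {binf B}" and q: "q \<ge> 1"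
  shows "binf B \<in> frob_ideal B q (bplus_part B)"
proof -
  have z: "bzero B \<noteq> binf B" using bzi[OF B B1] .
  have "binf B \<notin> bunits B" using z bil[OF B] unfolding bunits_def by auto
  then have "binf B \<in> bplus_part B" using bi[OF B] unfolding bplus_part_def by auto
  moreover have "badd B (bmult B q (binf B)) (bzero B) = binf B"
    using bmult_inf[OF B q] bzr[OF B bi[OF B]] by simp
  ultimately show ?thesis using bz[OF B] by (intro frob_idealI) auto
qed

context sm begin

lemma bmult_smash:
  assumes a: "a \<in> bcarrier M" and b: "b \<in> bcarrier N"
  shows "bmult (smash M N) q (Some (a,b)) =
    (if bmult M q a \<noteq> binf M \<and> bmult N q b \<noteq> binf N then Some (bmult M q a, bmult N q b) else None)"
proof (induction q)
  case 0 then show ?case using zM zN by (simp add: bmult_0 smash_simps)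
next
  case (Suc q)
  show ?case
  proof (cases "bmult M q a \<noteq> binf M \<and> bmult N q b \<noteq> binf N")
    case True
    then show ?thesis using Suc.IH by (simp add: bmult_Suc smash_simps)
  next
    case False
    then have "bmult M (Suc q) a = binf M \<or> bmult N (Suc q) b = binf N"
      using bir[OF M a] bir[OF N b] by (auto simp: bmult_Suc)
    then show ?thesis using Suc.IH False by (simp add: bmult_Suc smash_simps)
  qed
qed

lemma bmult_smash_None: "q \<ge> 1 \<Longrightarrow> bmult (smash M N) q None = None"
  by (cases q) (auto simp: bmult_Suc smash_simps)

lemma units_smash:
  assumes a: "a \<in> bcarrier M" "a \<noteq> binf M" and b: "b \<in> bcarrier N" "b \<noteq> binf N"
  shows "Some (a,b) \<in> bunits (smash M N) \<longleftrightarrow> a \<in> bunits M \<and> b \<in> bunits N"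
proof
  assume "Some (a,b) \<in> bunits (smash M N)"
  then obtain y where y: "y \<in> bcarrier (smash M N)" "badd (smash M N) (Some (a,b)) y = Some (bzero M, bzero N)"
    unfolding bunits_def smash_zero by blast
  then obtain c d where cd: "y = Some (c,d)" "c \<in> bcarrier M" "d \<in> bcarrier N"
    by (cases y) (auto simp: smash_simps)
  have "badd M a c = bzero M" "badd N b d = bzero N" using y(2) cd(1)
    by (auto simp: smash_simps split: if_splits)
  then show "a \<in> bunits M \<and> b \<in> bunits N" using a b cd unfolding bunits_def by auto
next
  assume "a \<in> bunits M \<and> b \<in> bunits N"
  then obtain c d where c: "c \<in> bcarrier M" "badd M a c = bzero M" and d: "d \<in> bcarrier N" "badd N b d = bzero N"
    unfolding bunits_def by auto
  have cn: "c \<noteq> binf M" using c bir[OF M a(1)] zM by auto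
  have dn: "d \<noteq> binf N" using d bir[OF N b(1)] zN by auto
  have "badd (smash M N) (Some (a,b)) (Some (c,d)) = Some (bzero M, bzero N)"
    using c d zM zN by (simp add: smash_simps)
  moreover have "Some (c,d) \<in> bcarrier (smash M N)" using c d cn dn by (simp add: smash_simps)
  moreover have "Some (a,b) \<in> bcarrier (smash M N)" using a b by (simp add: smash_simps)
  ultimately show "Some (a,b) \<in> bunits (smash M N)" unfolding bunits_def smash_zero by blast
qed

lemma None_nonunit: "None \<notin> bunits (smash M N)"
  unfolding bunits_def by (auto simp: smash_simps)

lemma frob_smash:
  assumes q: "q \<ge> 1" and a: "a \<in> bcarrier M" "a \<noteq> binf M" and b: "b \<in> bcarrier N" "b \<noteq> binf N"
  shows "Some (a,b) \<in> frob_ideal (smash M N) q (bplus_part (smash M N)) \<longleftrightarrow>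
    a \<in> frob_ideal M q (bplus_part M) \<or> b \<in> frob_ideal N q (bplus_part N)"
proof
  assume "Some (a,b) \<in> frob_ideal (smash M N) q (bplus_part (smash M N))"
  then obtain y n where y: "y \<in> bplus_part (smash M N)" and n: "n \<in> bcarrier (smash M N)"
    and e: "Some (a,b) = badd (smash M N) (bmult (smash M N) q y) n"
    unfolding frob_ideal_def ideal_gen_def by blast
  have yC: "y \<in> bcarrier (smash M N)" and yu: "y \<notin> bunits (smash M N)" using y unfolding bplus_part_def by auto
  have "y \<noteq> None"
  proof
    assume "y = None"
    with e bmult_smash_None[OF q] show False by (simp add: smash_simps)
  qed
  then obtain c d where ycd: "y = Some (c,d)" and c: "c \<in> bcarrier M" "c \<noteq> binf M" and d: "d \<in> bcarrier N" "d \<noteq> binf N"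
    using yC by (auto simp: smash_simps)
  have ne: "bmult M q c \<noteq> binf M \<and> bmult N q d \<noteq> binf N"
    using e ycd bmult_smash[OF c(1) d(1), of q] by (auto simp: smash_simps split: if_splits)
  then have bm: "bmult (smash M N) q y = Some (bmult M q c, bmult N q d)" using ycd bmult_smash[OF c(1) d(1), of q] by simp
  have "n \<noteq> None"
  proof
    assume "n = None"
    with e show False by (simp add: smash_simps)
  qed
  then obtain m1 n1 where nn: "n = Some (m1,n1)" and m1: "m1 \<in> bcarrier M" and n1: "n1 \<in> bcarrier N"
    using n by (auto simp: smash_simps)
  have ea: "a = badd M (bmult M q c) m1" and eb: "b = badd N (bmult N q d) n1"
    using e bm nn by (auto simp: smash_simps split: if_splits)
  have "c \<notin> bunits M \<or> d \<notin> bunits N" using yu ycd units_smash[OF c d] by auto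
  then show "a \<in> frob_ideal M q (bplus_part M) \<or> b \<in> frob_ideal N q (bplus_part N)"
  proof
    assume "c \<notin> bunits M"
    then have "c \<in> bplus_part M" using c unfolding bplus_part_def by auto
    then show ?thesis using ea m1 unfolding frob_ideal_def ideal_gen_def by blast
  next
    assume "d \<notin> bunits N"
    then have "d \<in> bplus_part N" using d unfolding bplus_part_def by auto
    then show ?thesis using eb n1 unfolding frob_ideal_def ideal_gen_def by blast
  qed
next
  assume "a \<in> frob_ideal M q (bplus_part M) \<or> b \<in> frob_ideal N q (bplus_part N)"
  then show "Some (a,b) \<in> frob_ideal (smash M N) q (bplus_part (smash M N))"
  proof
    assume "a \<in> frob_ideal M q (bplus_part M)"
    then obtain c m where c: "c \<in> bplus_part M" and m: "m \<in> bcarrier M" and ea: "a = badd M (bmult M q c) m"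
      unfolding frob_ideal_def ideal_gen_def by blast
    have cC: "c \<in> bcarrier M" and cu: "c \<notin> bunits M" using c unfolding bplus_part_def by auto
    have cn: "c \<noteq> binf M" using ea a(2) bmult_inf[OF M q] bil[OF M m] by auto
    have sn: "bmult M q c \<noteq> binf M" using ea a(2) bil[OF M m] by auto
    have mn: "m \<noteq> binf M" using ea a(2) bir[OF M bmult_cl[OF M cC]] by auto
    let ?y = "Some (c, bzero N)"
    have yC: "?y \<in> bcarrier (smash M N)" using cC cn bz[OF N] zN by (simp add: smash_simps)
    have yu: "?y \<notin> bunits (smash M N)" using units_smash[OF cC cn bz[OF N] zN] cu by simp
    have bm: "bmult (smash M N) q ?y = Some (bmult M q c, bzero N)"
      using bmult_smash[OF cC bz[OF N], of q] sn bmult_zero[OF N] zN by simp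
    have nC: "Some (m, b) \<in> bcarrier (smash M N)" using m mn b by (simp add: smash_simps)
    have "badd (smash M N) (Some (bmult M q c, bzero N)) (Some (m, b)) = Some (a,b)"
      using ea a(2) b bzl[OF N b(1)] by (simp add: smash_simps)
    then show ?thesis using yC yu bm nC
      by (intro frob_idealI[where c="?y" and n="Some (m, b)"]) (auto simp: bplus_part_def)
  next
    assume "b \<in> frob_ideal N q (bplus_part N)"
    then obtain c m where c: "c \<in> bplus_part N" and m: "m \<in> bcarrier N" and eb: "b = badd N (bmult N q c) m"
      unfolding frob_ideal_def ideal_gen_def by blast
    have cC: "c \<in> bcarrier N" and cu: "c \<notin> bunits N" using c unfolding bplus_part_def by auto
    have cn: "c \<noteq> binf N" using eb b(2) bmult_inf[OF N q] bil[OF N m] by auto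
    have sn: "bmult N q c \<noteq> binf N" using eb b(2) bil[OF N m] by auto
    have mn: "m \<noteq> binf N" using eb b(2) bir[OF N bmult_cl[OF N cC]] by auto
    let ?y = "Some (bzero M, c)"
    have yC: "?y \<in> bcarrier (smash M N)" using cC cn bz[OF M] zM by (simp add: smash_simps)
    have yu: "?y \<notin> bunits (smash M N)" using units_smash[OF bz[OF M] zM cC cn] cu by simp
    have bm: "bmult (smash M N) q ?y = Some (bzero M, bmult N q c)"
      using bmult_smash[OF bz[OF M] cC, of q] sn bmult_zero[OF M] zM by simp
    have nC: "Some (a, m) \<in> bcarrier (smash M N)" using m mn a by (simp add: smash_simps)
    have "badd (smash M N) (Some (bzero M, bmult N q c)) (Some (a, m)) = Some (a,b)"
      using eb b(2) a bzl[OF M a(1)] by (simp add: smash_simps)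
    then show ?thesis using yC yu bm nC
      by (intro frob_idealI[where c="?y" and n="Some (a, m)"]) (auto simp: bplus_part_def)
  qed
qed

lemma None_frob: "q \<ge> 1 \<Longrightarrow> None \<in> frob_ideal (smash M N) q (bplus_part (smash M N))"
proof -
  assume q: "q \<ge> 1"
  have "None \<in> bplus_part (smash M N)" using None_nonunit unfolding bplus_part_def by (simp add: smash_simps)
  moreover have "badd (smash M N) (bmult (smash M N) q None) None = None" by (simp add: smash_simps)
  moreover have "None \<in> bcarrier (smash M N)" by (simp add: smash_simps)
  ultimately show ?thesis by (intro frob_idealI) auto
qed

lemma HKF_smash: assumes q: "q \<ge> 1" shows "HKF (smash M N) q = HKF M q * HKF N q"
proof -
  let ?IM = "frob_ideal M q (bplus_part M)" and ?IN = "frob_ideal N q (bplus_part N)"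
    and ?IS = "frob_ideal (smash M N) q (bplus_part (smash M N))"
  have iM: "binf M \<in> ?IM" using inf_frob[OF M M1 q] .
  have iN: "binf N \<in> ?IN" using inf_frob[OF N N1 q] .
  have iS: "binf (smash M N) \<in> ?IS" using None_frob[OF q] by (simp add: smash_simps)
  have eq: "bcarrier (smash M N) - ?IS = Some ` ((bcarrier M - ?IM) \<times> (bcarrier N - ?IN))"
  proof (rule set_eqI)
    fix x show "x \<in> bcarrier (smash M N) - ?IS \<longleftrightarrow> x \<in> Some ` ((bcarrier M - ?IM) \<times> (bcarrier N - ?IN))"
    proof (cases x)
      case None then show ?thesis using None_frob[OF q] by auto
    next
      case (Some xx)
      then obtain a b where x: "x = Some (a,b)" by (cases xx) auto
      show ?thesis
      proof (cases "a \<in> bcarrier M \<and> a \<noteq> binf M \<and> b \<in> bcarrier N \<and> b \<noteq> binf N")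
        case True
        then show ?thesis using frob_smash[OF q, of a b] x by (auto simp: smash_simps)
      next
        case False
        then show ?thesis using x iM iN by (auto simp: smash_simps)
      qed
    qed
  qed
  have "HKF (smash M N) q = card (bcarrier (smash M N) - ?IS)" using HKF_alt[OF iS] .
  also have "\<dots> = card ((bcarrier M - ?IM) \<times> (bcarrier N - ?IN))"
    unfolding eq by (rule card_image) (simp add: inj_on_def)
  also have "\<dots> = HKF M q * HKF N q"
    using HKF_alt[OF iM] HKF_alt[OF iN] by (simp add: card_cartesian_product)
  finally show ?thesis .
qed

end

theorem mainTheorem10:
  fixes M :: "'a binoid" and N :: "'b binoid"
  assumes "is_binoid M" and "is_binoid N"
    and "fin_gen M" and "fin_gen N"
    and "semipositive M" and "semipositive N"
    and "bdim M \<noteq> \<infinity>" and "bdim N \<noteq> \<infinity>"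
    and "ehk_exists M" and "ehk_exists N"
  shows "ehk_exists (smash M N) \<and> ehk (smash M N) = ehk M * ehk N"
proof -
  have M1: "bcarrier M \<noteq> {binf M}" and N1: "bcarrier N \<noteq> {binf N}"
    using assms(5,6) unfolding semipositive_def by auto
  interpret sm M N using assms(1,2) M1 N1 by unfold_locales
  obtain dM where dM: "bdim M = enat dM" using fin_dim[OF assms(1) M1 assms(7)] by blast
  obtain dN where dN: "bdim N = enat dN" using fin_dim[OF assms(2) N1 assms(8)] by blast
  have dS: "bdim (smash M N) = enat (dM + dN)" using dim_smash[OF dM dN] .
  have ev: "\<forall>\<^sub>F q in sequentially. HK_ratio M q * HK_ratio N q = HK_ratio (smash M N) q"
  proof (rule eventually_sequentiallyI[of 1])
    fix q :: nat assume q: "q \<ge> 1"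
    show "HK_ratio M q * HK_ratio N q = HK_ratio (smash M N) q"
      unfolding HK_ratio_def dM dN dS using HKF_smash[OF q]
      by (simp add: power_add)
  qed
  have lM: "HK_ratio M \<longlonglongrightarrow> ehk M" using assms(9) unfolding ehk_exists_def ehk_def
    by (simp add: convergent_LIMSEQ_iff)
  have lN: "HK_ratio N \<longlonglongrightarrow> ehk N" using assms(10) unfolding ehk_exists_def ehk_def
    by (simp add: convergent_LIMSEQ_iff)
  have "(\<lambda>q. HK_ratio M q * HK_ratio N q) \<longlonglongrightarrow> ehk M * ehk N" using tendsto_mult[OF lM lN] .
  then have lS: "HK_ratio (smash M N) \<longlonglongrightarrow> ehk M * ehk N" using Lim_transform_eventually[OF _ ev] by blast
  have c: "convergent (HK_ratio (smash M N))" using lS by (auto simp: convergent_def)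
  have "lim (HK_ratio (smash M N)) = ehk M * ehk N" using limI[OF lS] .
  then show ?thesis using c unfolding ehk_exists_def ehk_def[of "smash M N"] by simp
qed

end
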